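(* Let $c\ge1$ and $\gamma\in(0,1/2]$. There is a constant $C=C(c,\gamma)$ such that the following holds. Let $\theta_1\ge\dots\ge\theta_n$ be $c$-spread, let $K=\gamma n$ be an integer with $K\ge1$, and let $\epsilon$ satisfy $\frac{4c}{\gamma n^2}\le\epsilon\le1$. Then $H^{(t,\epsilon)}\le C\,\frac{n}{\sqrt\epsilon}$ where $t=t(\epsilon,K)$. Moreover, for every $c$-spread instance with $n\ge2$, every $1\le K\le n-1$ and every $\epsilon$ with $\frac cn\le\epsilon\le1$, we have $H^{(0,\epsilon)}=\sum_{i=1}^n\min\{\Delta_i^{-2},\epsilon^{-2}\}\ge\frac{n}{4c\epsilon}$.
   Context: Means $\theta_1\ge\dots\ge\theta_n$ in $[0,1]$ are called $c$-spread (for $c\ge1$) if $|\theta_i-\theta_j|\in\left[\frac{|i-j|}{cn},\frac{c|i-j|}{n}\right]$ for all $i,j\in[n]$. Gaps: $\Delta_i=\theta_i-\theta_{K+1}$ for $i\le K$, $\Delta_i=\theta_K-\theta_i$ for $i\ge K+1$. $t(\epsilon,K)$ is the largest $t\in\{0,\dots,K-1\}$ with $\Delta_{K-t}\cdot t\le K\epsilon$ and $\Delta_{K+t+1}\cdot t\le K\epsilon$. $\Psi_t=\min(\Delta_{K-t},\Delta_{K+t+1})$, $\Psi_t^{\epsilon}=\max(\epsilon,\Psi_t)$, and $H^{(t,\epsilon)}=\sum_{i=1}^n\min\{\Delta_i^{-2},(\Psi_t^\epsilon)^{-2}\}$. *)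

theory Defs
  imports Complex_Main
begin

text \<open>Means are given as a function theta :: nat => real, used on indices 1..n.\<close>

definition c_spread :: "real \<Rightarrow> nat \<Rightarrow> (nat \<Rightarrow> real) \<Rightarrow> bool" where
  "c_spread c n theta \<longleftrightarrow>
     (\<forall>i\<in>{1..n}. 0 \<le> theta i \<and> theta i \<le> 1) \<and>
     (\<forall>i j. 1 \<le> i \<longrightarrow> i \<le> j \<longrightarrow> j \<le> n \<longrightarrow> theta j \<le> theta i) \<and>
     (\<forall>i\<in>{1..n}. \<forall>j\<in>{1..n}.
        \<bar>real i - real j\<bar> / (c * real n) \<le> \<bar>theta i - theta j\<bar> \<and>
        \<bar>theta i - theta j\<bar> \<le> c * \<bar>real i - real j\<bar> / real n)"

definition gap :: "(nat \<Rightarrow> real) \<Rightarrow> nat \<Rightarrow> nat \<Rightarrow> real" where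
  "gap theta K i = (if i \<le> K then theta i - theta (K + 1) else theta K - theta i)"

definition t_sel :: "(nat \<Rightarrow> real) \<Rightarrow> nat \<Rightarrow> real \<Rightarrow> nat" where
  "t_sel theta K eps = (GREATEST t. t \<le> K - 1 \<and>
       gap theta K (K - t) * real t \<le> real K * eps \<and>
       gap theta K (K + t + 1) * real t \<le> real K * eps)"

definition Psi :: "(nat \<Rightarrow> real) \<Rightarrow> nat \<Rightarrow> nat \<Rightarrow> real" where
  "Psi theta K t = min (gap theta K (K - t)) (gap theta K (K + t + 1))"

definition Psi_eps :: "(nat \<Rightarrow> real) \<Rightarrow> nat \<Rightarrow> nat \<Rightarrow> real \<Rightarrow> real" where
  "Psi_eps theta K t eps = max eps (Psi theta K t)"

definition H :: "(nat \<Rightarrow> real) \<Rightarrow> nat \<Rightarrow> nat \<Rightarrow> nat \<Rightarrow> real \<Rightarrow> real" where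
  "H theta n K t eps = (\<Sum>i=1..n. min (1 / (gap theta K i)^2) (1 / (Psi_eps theta K t eps)^2))"

end

theory Submission
  imports Defs
begin


lemma sum_min_bound:
  fixes A B :: real
  assumes A: "A > 0" and B: "B > 0"
  shows "(\<Sum>d=1..N. min (A/(real d)^2) B) \<le> 3 * sqrt (A*B)"
proof -
  define s where "s = sqrt (A/B)"
  define D where "D = nat \<lfloor>s\<rfloor>"
  have s0: "s > 0" using A B by (simp add: s_def)
  have D1: "real D \<le> s" using s0 by (simp add: D_def)
  have D2: "s < real D + 1" using s0 by (simp add: D_def)
  have key: "(\<Sum>d=1..N. min (A/(real d)^2) B) \<le> real (min N D) * B + 2*A*(1/(real D+1) - 1/(real (max N D)+1))"
  proof (induction N)
    case 0
    then show ?case by simp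
  next
    case (Suc N)
    show ?case
    proof (cases "Suc N \<le> D")
      case True
      then have "min (Suc N) D = Suc N" "min N D = N" "max N D = D" "max (Suc N) D = D" by auto
      moreover have "min (A/(real (Suc N))^2) B \<le> B" by simp
      ultimately show ?thesis using Suc.IH by (simp add: algebra_simps)
    next
      case False
      then have "min (Suc N) D = D" "min N D = D" "max N D = N" "max (Suc N) D = Suc N" by auto
      moreover have "min (A/(real (Suc N))^2) B \<le> 2*A*(1/(real N+1) - 1/(real N+2))"
      proof -
        have "min (A/(real (Suc N))^2) B \<le> A/(real N+1)^2" by (simp add: add.commute)
        also have "\<dots> = (2*A)/(2*(real N+1)^2)" by simp
        also have "\<dots> \<le> (2*A)/((real N+1)*(real N+2))"
          using A by (intro divide_left_mono) (auto simp: power2_eq_square algebra_simps intro!: mult_pos_pos add_pos_nonneg)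
        also have "\<dots> = 2*A*(1/(real N+1) - 1/(real N+2))"
          by (simp add: field_simps)
        finally show ?thesis .
      qed
      ultimately show ?thesis using Suc.IH by (simp add: algebra_simps)
    qed
  qed
  have e1: "real (min N D) * B \<le> sqrt (A*B)"
  proof -
    have "real (min N D) * B \<le> s * B" using D1 B by (intro mult_right_mono) auto
    also have "s * B = sqrt (A*B)" using A B
      by (simp add: s_def real_sqrt_divide real_sqrt_mult field_simps)
    finally show ?thesis .
  qed
  have e2: "2*A*(1/(real D+1) - 1/(real (max N D)+1)) \<le> 2 * sqrt (A*B)"
  proof -
    have "2*A*(1/(real D+1) - 1/(real (max N D)+1)) \<le> 2*A/(real D + 1)"
    proof -
      have "0 \<le> 2*A*(1/(real (max N D)+1))" using A by simp
      then show ?thesis by (simp add: right_diff_distrib)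
    qed
    also have "\<dots> \<le> 2*A/s" using A s0 D2 by (intro divide_left_mono) auto
    also have "2*A/s = 2 * sqrt(A*B)" using A B
      by (simp add: s_def real_sqrt_divide real_sqrt_mult field_simps)
    finally show ?thesis .
  qed
  show ?thesis using key e1 e2 by linarith
qed



lemma cs_lo:
  assumes cs: "c_spread c n theta" and c: "c > 0" and ij: "1 \<le> i" "i < j" "j \<le> n"
  shows "real (j - i) / (c * real n) \<le> theta i - theta j"
proof -
  have m: "theta j \<le> theta i" using cs ij unfolding c_spread_def by auto
  have "\<bar>real i - real j\<bar> / (c * real n) \<le> \<bar>theta i - theta j\<bar>"
  proof -
    have ii: "i \<in> {1..n}" "j \<in> {1..n}" using ij by auto
    then show ?thesis using cs unfolding c_spread_def by blast
  qed
  moreover have "\<bar>real i - real j\<bar> = real (j - i)" using ij by (simp add: of_nat_diff)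
  moreover have "\<bar>theta i - theta j\<bar> = theta i - theta j" using m by simp
  ultimately show ?thesis by simp
qed

lemma cs_hi:
  assumes cs: "c_spread c n theta" and c: "c > 0" and ij: "1 \<le> i" "i < j" "j \<le> n"
  shows "theta i - theta j \<le> c * real (j - i) / real n"
proof -
  have m: "theta j \<le> theta i" using cs ij unfolding c_spread_def by auto
  have "\<bar>theta i - theta j\<bar> \<le> c * \<bar>real i - real j\<bar> / real n"
  proof -
    have ii: "i \<in> {1..n}" "j \<in> {1..n}" using ij by auto
    then show ?thesis using cs unfolding c_spread_def by blast
  qed
  moreover have "\<bar>real i - real j\<bar> = real (j - i)" using ij by (simp add: of_nat_diff)
  moreover have "\<bar>theta i - theta j\<bar> = theta i - theta j" using m by simp
  ultimately show ?thesis by simp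
qed

definition dd :: "nat \<Rightarrow> nat \<Rightarrow> nat" where
  "dd K i = (if i \<le> K then K + 1 - i else i - K)"

lemma gap_lo:
  assumes cs: "c_spread c n theta" and c: "c > 0" and K: "1 \<le> K" "K + 1 \<le> n"
    and i: "1 \<le> i" "i \<le> n"
  shows "real (dd K i) / (c * real n) \<le> gap theta K i"
proof (cases "i \<le> K")
  case True
  then show ?thesis using cs_lo[OF cs c, of i "K+1"] i K by (simp add: gap_def dd_def)
next
  case False
  then show ?thesis using cs_lo[OF cs c, of K i] i K by (simp add: gap_def dd_def)
qed

lemma gap_hi:
  assumes cs: "c_spread c n theta" and c: "c > 0" and K: "1 \<le> K" "K + 1 \<le> n"
    and i: "1 \<le> i" "i \<le> n"
  shows "gap theta K i \<le> c * real (dd K i) / real n"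
proof (cases "i \<le> K")
  case True
  then show ?thesis using cs_hi[OF cs c, of i "K+1"] i K by (simp add: gap_def dd_def)
next
  case False
  then show ?thesis using cs_hi[OF cs c, of K i] i K by (simp add: gap_def dd_def)
qed

lemma dd_pos: "1 \<le> dd K i" by (auto simp: dd_def)

lemma gap_pos:
  assumes cs: "c_spread c n theta" and c: "c > 0" and K: "1 \<le> K" "K + 1 \<le> n"
    and i: "1 \<le> i" "i \<le> n"
  shows "gap theta K i > 0"
proof -
  have "real (dd K i) / (c * real n) > 0" using dd_pos[of K i] c K by simp
  then show ?thesis using gap_lo[OF assms] by linarith
qed



lemma sum_dd_bound:
  fixes A B :: real
  assumes A: "A > 0" and B: "B > 0" and K: "K \<le> n"
  shows "(\<Sum>i=1..n. min (A/(real (dd K i))^2) B) \<le> 6 * sqrt (A*B)"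
proof -
  let ?g = "\<lambda>d. min (A/(real d)^2) B"
  have split: "(\<Sum>i=1..n. ?g (dd K i)) = (\<Sum>i=1..K. ?g (dd K i)) + (\<Sum>i=K+1..K+(n-K). ?g (dd K i))"
    using sum.ub_add_nat[of 1 K "\<lambda>i. ?g (dd K i)" "n-K"] K by simp
  have l: "(\<Sum>i=1..K. ?g (dd K i)) = (\<Sum>d=1..K. ?g d)"
  proof -
    have "(\<Sum>i=1..K. ?g (dd K i)) = (\<Sum>i=1..K. ?g (K + 1 - i))"
      by (intro sum.cong) (auto simp: dd_def)
    also have "\<dots> = (\<Sum>d=1..K. ?g d)"
      using sum.atLeastAtMost_rev[of ?g 1 K] by simp
    finally show ?thesis .
  qed
  have r: "(\<Sum>i=K+1..K+(n-K). ?g (dd K i)) = (\<Sum>d=1..n-K. ?g d)"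
  proof -
    have "(\<Sum>i=K+1..K+(n-K). ?g (dd K i)) = (\<Sum>i=1+K..(n-K)+K. ?g (i - K))"
      by (intro sum.cong) (auto simp: dd_def)
    also have "\<dots> = (\<Sum>d=1..n-K. ?g d)"
      by (subst sum.shift_bounds_cl_nat_ivl) simp
    finally show ?thesis .
  qed
  show ?thesis using split l r sum_min_bound[OF A B, of K] sum_min_bound[OF A B, of "n-K"] by linarith
qed



lemma part2:
  assumes c: "c \<ge> 1" and cs: "c_spread c n theta" and n: "n \<ge> 2" and K: "1 \<le> K" "K \<le> n - 1"
    and e1: "c / real n \<le> eps" and e2: "eps \<le> 1"
  shows "H theta n K 0 eps = (\<Sum>i=1..n. min (1 / (gap theta K i)^2) (1 / eps^2)) \<and>
         H theta n K 0 eps \<ge> real n / (4 * c * eps)"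
proof -
  have c0: "c > 0" using c by simp
  have K1: "K + 1 \<le> n" using K n by simp
  have n0: "real n > 0" using n by simp
  have ep: "eps > 0" using e1 c0 n0 by (smt (verit) divide_pos_pos)
  have "Psi theta K 0 = theta K - theta (K+1)" by (simp add: Psi_def gap_def)
  also have "\<dots> \<le> c * real (K + 1 - K) / real n" using cs_hi[OF cs c0, of K "K+1"] K K1 by simp
  finally have "Psi theta K 0 \<le> eps" using e1 by simp
  then have PE: "Psi_eps theta K 0 eps = eps" by (simp add: Psi_eps_def)
  have eq: "H theta n K 0 eps = (\<Sum>i=1..n. min (1 / (gap theta K i)^2) (1 / eps^2))"
    by (simp add: H_def PE)
  define m where "m = eps * real n / c"
  have m1: "1 \<le> m" using e1 c0 n0 by (simp add: m_def field_simps)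
  have mn: "m \<le> real n" using e2 c ep n0 unfolding m_def
    by (simp add: field_simps)
  have geq: "\<And>S p. S \<subseteq> {1..n} \<Longrightarrow> card S = p \<Longrightarrow> (\<forall>i\<in>S. gap theta K i \<le> eps)
      \<Longrightarrow> real p / eps^2 \<le> (\<Sum>i=1..n. min (1 / (gap theta K i)^2) (1 / eps^2))"
  proof -
    fix S p assume S: "S \<subseteq> {1..n}" "card S = p" "\<forall>i\<in>S. gap theta K i \<le> eps"
    have "real p / eps^2 = real (card S) * (1/eps^2)" using S by simp
    also have "\<dots> \<le> (\<Sum>i\<in>S. min (1 / (gap theta K i)^2) (1 / eps^2))"
    proof (rule sum_bounded_below)
      fix i assume iS: "i \<in> S"
      then have i: "1 \<le> i" "i \<le> n" using S by auto
      have gp: "gap theta K i > 0" using gap_pos[OF cs c0 K(1) K1 i] .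
      have "gap theta K i ^2 \<le> eps^2" using S iS gp by (intro power_mono) auto
      then have "1/eps^2 \<le> 1/(gap theta K i)^2" using gp ep by (intro divide_left_mono) auto
      then show "1/eps^2 \<le> min (1 / (gap theta K i)^2) (1 / eps^2)" by simp
    qed
    also have "\<dots> \<le> (\<Sum>i=1..n. min (1 / (gap theta K i)^2) (1 / eps^2))"
      using S by (intro sum_mono2) auto
    finally show "real p / eps^2 \<le> (\<Sum>i=1..n. min (1 / (gap theta K i)^2) (1 / eps^2))" .
  qed
  define q where "q = nat \<lfloor>m\<rfloor>"
  have q1: "real q \<le> m" "m < real q + 1" "1 \<le> q" using m1 by (simp_all add: q_def) linarith+
  have qm: "m / 2 \<le> real q" using q1 by linarith
  obtain p where pm: "m / 2 \<le> real p" and pb: "real n / (2*c*eps) \<le> real p / eps^2"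
    and pH: "real p / eps^2 \<le> (\<Sum>i=1..n. min (1 / (gap theta K i)^2) (1 / eps^2))"
  proof -
    define L where "L = (if n - K \<le> K then K else n - K)"
    define p where "p = min L q"
    have L2: "real n / 2 \<le> real L" using K1 by (auto simp: L_def of_nat_diff)
    have pm: "m / 2 \<le> real p" using L2 mn qm by (simp add: p_def)
    have pb: "real n / (2*c*eps) \<le> real p / eps^2"
    proof -
      have "real n / (2*c*eps) = (m/2) / eps^2" using c0 ep by (simp add: m_def field_simps power2_eq_square)
      also have "\<dots> \<le> real p / eps^2" using pm by (intro divide_right_mono) auto
      finally show ?thesis .
    qed
    have gl: "\<And>i. 1 \<le> i \<Longrightarrow> i \<le> n \<Longrightarrow> dd K i \<le> q \<Longrightarrow> gap theta K i \<le> eps"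
    proof -
      fix i assume i: "1 \<le> i" "i \<le> n" "dd K i \<le> q"
      have "gap theta K i \<le> c * real (dd K i) / real n" using gap_hi[OF cs c0 K(1) K1 i(1,2)] .
      also have "\<dots> \<le> c * m / real n" using i(3) q1 c0 n0
        by (intro divide_right_mono mult_left_mono) auto
      also have "\<dots> = eps" using c0 n0 by (simp add: m_def)
      finally show "gap theta K i \<le> eps" .
    qed
    show ?thesis
    proof (cases "n - K \<le> K")
      case True
      then have pK: "p \<le> K" "p \<le> q" by (auto simp: p_def L_def)
      have "real p / eps^2 \<le> (\<Sum>i=1..n. min (1 / (gap theta K i)^2) (1 / eps^2))"
        using pK K1 by (intro geq[of "{K+1-p..K}"]) (auto intro!: gl simp: dd_def)
      then show ?thesis using that pm pb by blast
    next
      case False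
      then have pK: "p \<le> n - K" "p \<le> q" by (auto simp: p_def L_def)
      have "real p / eps^2 \<le> (\<Sum>i=1..n. min (1 / (gap theta K i)^2) (1 / eps^2))"
        using pK K1 by (intro geq[of "{K+1..K+p}"]) (auto intro!: gl simp: dd_def)
      then show ?thesis using that pm pb by blast
    qed
  qed
  have "real n / (4 * c * eps) \<le> real n / (2*c*eps)" using c0 ep n0
    by (intro divide_left_mono) auto
  then show ?thesis using eq pb pH by simp
qed



lemma part1:
  fixes c \<gamma> :: real
  assumes c: "c \<ge> 1" and g0: "0 < \<gamma>" and g1: "\<gamma> \<le> 1/2"
    and cs: "c_spread c n theta" and Kg: "real K = \<gamma> * real n" and K1: "K \<ge> 1"
    and e1: "4 * c / (\<gamma> * (real n)^2) \<le> eps" and e2: "eps \<le> 1"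
  shows "H theta n K (t_sel theta K eps) eps \<le> (6 * c * sqrt (c^2/\<gamma>^2 + 2*c^3/\<gamma>)) * real n / sqrt eps"
proof -
  define M where "M = c^2/\<gamma>^2 + 2*c^3/\<gamma>"
  have c0: "c > 0" using c by simp
  have M0: "M > 0" using c0 g0 by (simp add: M_def add_pos_pos)
  have n0: "real n > 0" using Kg K1 g0 by (cases n) auto
  have Kn: "K + 1 \<le> n"
  proof -
    have "2 * real K \<le> real n" using Kg g1 n0 by (simp add: mult_right_mono)
    then show ?thesis using K1 by linarith
  qed
  have K2n: "2 * K \<le> n"
  proof -
    have "2 * real K \<le> real n" using Kg g1 n0 by (simp add: mult_right_mono)
    then show ?thesis by linarith
  qed
  have ep: "eps > 0" using e1 c0 g0 n0 by (smt (verit) divide_pos_pos mult_pos_pos zero_less_power)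
  define t where "t = t_sel theta K eps"
  define P where "P = (\<lambda>t. t \<le> K - 1 \<and>
       gap theta K (K - t) * real t \<le> real K * eps \<and>
       gap theta K (K + t + 1) * real t \<le> real K * eps)"
  have P0: "P 0" using ep by (simp add: P_def)
  have Pb: "\<And>y. P y \<Longrightarrow> y \<le> K - 1" by (simp add: P_def)
  have tdef: "t = Greatest P" by (simp add: t_def t_sel_def P_def)
  have Pt: "P t" using GreatestI_nat[of P 0 "K - 1", OF P0 Pb] tdef by simp
  have tmax: "\<And>y. P y \<Longrightarrow> y \<le> t" using Greatest_le_nat[of P _ "K - 1", OF _ Pb] tdef by simp
  have tK: "t \<le> K - 1" using Pt by (simp add: P_def)
  have Psi_lo: "real (t+1) / (c * real n) \<le> Psi theta K t"
  proof -
    have a: "real (t+1) / (c * real n) \<le> gap theta K (K - t)"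
      using gap_lo[OF cs c0 K1 Kn, of "K - t"] tK K1 Kn by (simp add: dd_def)
    have b: "real (t+1) / (c * real n) \<le> gap theta K (K + t + 1)"
      using gap_lo[OF cs c0 K1 Kn, of "K + t + 1"] tK K1 K2n by (simp add: dd_def)
    show ?thesis using a b by (simp add: Psi_def)
  qed
  have Psi_sq: "eps / M \<le> (Psi theta K t)^2"
  proof (cases "t = K - 1")
    case True
    then have "real (t+1) = real K" using K1 by simp
    then have "\<gamma> / c \<le> Psi theta K t" using Psi_lo Kg c0 n0 by simp
    then have "(\<gamma>/c)^2 \<le> (Psi theta K t)^2" using g0 c0 by (intro power_mono) auto
    moreover have "eps / M \<le> (\<gamma>/c)^2"
    proof -
      have "eps / M \<le> 1 / M" using e2 M0 by (intro divide_right_mono) auto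
      also have "\<dots> \<le> 1 / (c^2/\<gamma>^2)" using c0 g0 M0 by (intro divide_left_mono) (auto simp: M_def)
      also have "\<dots> = (\<gamma>/c)^2" by (simp add: power_divide)
      finally show ?thesis .
    qed
    ultimately show ?thesis by linarith
  next
    case False
    then have tl: "t + 1 \<le> K - 1" using tK by simp
    have nP: "\<not> P (t+1)" using tmax by fastforce
    then have viol: "real K * eps < gap theta K (K - (t+1)) * real (t+1) \<or>
                     real K * eps < gap theta K (K + (t+1) + 1) * real (t+1)"
      using tl by (auto simp: P_def)
    have h1: "gap theta K (K - (t+1)) \<le> c * real (t+2) / real n"
      using gap_hi[OF cs c0 K1 Kn, of "K - (t+1)"] tl Kn by (simp add: dd_def)
    have h2: "gap theta K (K + (t+1) + 1) \<le> c * real (t+2) / real n"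
      using gap_hi[OF cs c0 K1 Kn, of "K + (t+1) + 1"] tl K2n by (simp add: dd_def)
    have "real K * eps < c * real (t+2) / real n * real (t+1)"
      using viol h1 h2 by (smt (verit) mult_right_mono of_nat_0_le_iff)
    then have X: "\<gamma> * real n * eps * real n < c * real (t+2) * real (t+1)"
      using Kg n0 by (simp add: field_simps)
    define T where "T = real t"
    have X': "\<gamma> * eps * (real n)^2 < c * (T+2) * (T+1)" using X by (simp add: T_def power2_eq_square algebra_simps)
    have "eps / M \<le> \<gamma> * eps / (2*c^3)"
    proof -
      have "2*c^3/\<gamma> \<le> M" using c0 g0 by (simp add: M_def)
      then have "eps / M \<le> eps / (2*c^3/\<gamma>)" using ep c0 g0 M0 by (intro divide_left_mono) auto
      then show ?thesis by (simp add: mult.commute)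
    qed
    also have "\<gamma> * eps / (2*c^3) \<le> (T+1)^2 / (c * real n)^2"
    proof -
      have "\<gamma> * eps * (real n)^2 \<le> c * (2*(T+1)^2)"
      proof -
        have "(T+2) * (T+1) \<le> 2*(T+1)^2" by (simp add: T_def power2_eq_square algebra_simps)
        then have "c * ((T+2) * (T+1)) \<le> c * (2*(T+1)^2)" using c0 by (intro mult_left_mono) auto
        then show ?thesis using X' by (simp add: algebra_simps)
      qed
      then show ?thesis using c0 n0 by (simp add: field_simps power2_eq_square power3_eq_cube)
    qed
    also have "(T+1)^2 / (c * real n)^2 \<le> (Psi theta K t)^2"
    proof -
      have "(T+1) / (c * real n) \<le> Psi theta K t" using Psi_lo by (simp add: T_def add.commute)
      moreover have "0 \<le> (T+1) / (c * real n)" using c0 n0 by (simp add: T_def)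
      ultimately have "((T+1) / (c * real n))^2 \<le> (Psi theta K t)^2" by (intro power_mono)
      then show ?thesis by (simp add: power_divide)
    qed
    finally show ?thesis .
  qed
  have Psi_pos: "Psi theta K t > 0"
  proof -
    have "real (t+1) / (c * real n) > 0" using c0 n0 by simp
    then show ?thesis using Psi_lo by linarith
  qed
  have inv_bound: "1 / (Psi_eps theta K t eps)^2 \<le> M / eps"
  proof -
    have pe: "Psi theta K t \<le> Psi_eps theta K t eps" by (simp add: Psi_eps_def)
    have "(Psi theta K t)^2 \<le> (Psi_eps theta K t eps)^2" using pe Psi_pos by (intro power_mono) auto
    moreover have "Psi_eps theta K t eps > 0" using pe Psi_pos by linarith
    ultimately have "1 / (Psi_eps theta K t eps)^2 \<le> 1 / (Psi theta K t)^2" using Psi_pos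
      by (intro divide_left_mono) auto
    also have "\<dots> \<le> 1 / (eps / M)" using Psi_sq ep M0 Psi_pos by (intro divide_left_mono) auto
    also have "\<dots> = M / eps" by simp
    finally show ?thesis .
  qed
  define A where "A = (c * real n)^2"
  have A0: "A > 0" using c0 n0 by (simp add: A_def)
  have termb: "\<And>i. i \<in> {1..n} \<Longrightarrow> min (1 / (gap theta K i)^2) (1 / (Psi_eps theta K t eps)^2)
       \<le> min (A / (real (dd K i))^2) (M / eps)"
  proof -
    fix i assume "i \<in> {1..n}"
    then have i: "1 \<le> i" "i \<le> n" by auto
    have d0: "real (dd K i) / (c * real n) > 0" using dd_pos[of K i] c0 n0 by simp
    have gl: "real (dd K i) / (c * real n) \<le> gap theta K i" using gap_lo[OF cs c0 K1 Kn i] .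
    have "(real (dd K i) / (c * real n))^2 \<le> (gap theta K i)^2" using gl d0 by (intro power_mono) auto
    then have "1 / (gap theta K i)^2 \<le> 1 / (real (dd K i) / (c * real n))^2"
    proof (rule divide_left_mono)
      have "gap theta K i > 0" using d0 gl by linarith
      then show "0 < (gap theta K i)\<^sup>2 * (real (dd K i) / (c * real n))\<^sup>2" using d0 by (intro mult_pos_pos zero_less_power)
    qed (use \<open>(real (dd K i) / (c * real n))^2 \<le> (gap theta K i)^2\<close> in simp_all)
    also have "\<dots> = A / (real (dd K i))^2" by (simp add: A_def power_divide)
    finally have "1 / (gap theta K i)^2 \<le> A / (real (dd K i))^2" .
    then show "min (1 / (gap theta K i)^2) (1 / (Psi_eps theta K t eps)^2)
       \<le> min (A / (real (dd K i))^2) (M / eps)" using inv_bound by linarith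
  qed
  have "H theta n K t eps \<le> (\<Sum>i=1..n. min (A / (real (dd K i))^2) (M / eps))"
    unfolding H_def by (intro sum_mono termb)
  also have "\<dots> \<le> 6 * sqrt (A * (M / eps))"
    using sum_dd_bound[OF A0 _, of "M/eps" K n] M0 ep Kn by simp
  also have "\<dots> = (6 * c * sqrt M) * real n / sqrt eps"
    using c0 n0 ep M0 by (simp add: A_def real_sqrt_mult real_sqrt_divide)
  finally show ?thesis by (simp add: t_def M_def)
qed


theorem lemma1:
  fixes c \<gamma> :: real
  assumes "c \<ge> 1" and "0 < \<gamma>" and "\<gamma> \<le> 1/2"
  shows "(\<exists>C::real. \<forall>(n::nat) (theta::nat \<Rightarrow> real) (K::nat) (eps::real).
            c_spread c n theta \<longrightarrow> real K = \<gamma> * real n \<longrightarrow> K \<ge> 1 \<longrightarrow>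
            4 * c / (\<gamma> * (real n)^2) \<le> eps \<longrightarrow> eps \<le> 1 \<longrightarrow>
            H theta n K (t_sel theta K eps) eps \<le> C * real n / sqrt eps)
         \<and> (\<forall>(n::nat) (theta::nat \<Rightarrow> real) (K::nat) (eps::real).
            c_spread c n theta \<longrightarrow> n \<ge> 2 \<longrightarrow> 1 \<le> K \<longrightarrow> K \<le> n - 1 \<longrightarrow>
            c / real n \<le> eps \<longrightarrow> eps \<le> 1 \<longrightarrow>
            H theta n K 0 eps = (\<Sum>i=1..n. min (1 / (gap theta K i)^2) (1 / eps^2)) \<and>
            H theta n K 0 eps \<ge> real n / (4 * c * eps))"
proof
  show "\<exists>C::real. \<forall>(n::nat) (theta::nat \<Rightarrow> real) (K::nat) (eps::real).
            c_spread c n theta \<longrightarrow> real K = \<gamma> * real n \<longrightarrow> K \<ge> 1 \<longrightarrow>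
            4 * c / (\<gamma> * (real n)^2) \<le> eps \<longrightarrow> eps \<le> 1 \<longrightarrow>
            H theta n K (t_sel theta K eps) eps \<le> C * real n / sqrt eps"
    using part1[OF assms] by blast
  show "\<forall>(n::nat) (theta::nat \<Rightarrow> real) (K::nat) (eps::real).
            c_spread c n theta \<longrightarrow> n \<ge> 2 \<longrightarrow> 1 \<le> K \<longrightarrow> K \<le> n - 1 \<longrightarrow>
            c / real n \<le> eps \<longrightarrow> eps \<le> 1 \<longrightarrow>
            H theta n K 0 eps = (\<Sum>i=1..n. min (1 / (gap theta K i)^2) (1 / eps^2)) \<and>
            H theta n K 0 eps \<ge> real n / (4 * c * eps)"
    using part2[OF assms(1)] by blast
qed

end
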